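(* Let $n\ge1$, let $\preceq$ be an admissible order on $L([0,1])$, let $F\colon L([0,1])\times L([0,1])\to L([0,1])$, $G\colon L([0,1])^n\to L([0,1])$ be functions and let $m\colon 2^N\to L([0,1])$ be an IV fuzzy measure with respect to $\preceq$. Then: (i) if $F$ is non-decreasing in the second variable, the triplet $(m,F,\vee)$ satisfies Condition (WDS) for any $m$; (ii) if $G=f\circ \mathrm{Proj}_1$ or $G=f\circ\vee$ for some function $f\colon L([0,1])\to L([0,1])$, then the triplet $(m,\wedge,G)$ satisfies Condition (WDS) for any $m$; (iii) the triplet $(m,\wedge,\vee)$ satisfies Condition (WDS) for any $m$.
   Context: $N=\{1,\dots,n\}$. $L([0,1])=\{[a,b]: 0\le a\le b\le 1\}$, $\mathbf 0=[0,0]$, $\mathbf 1=[1,1]$. $[a,b]\le_{spo}[c,d]$ iff $a\le c$ and $b\le d$. An admissible order $\preceq$ on $L([0,1])$ is a total order such that $X\le_{spo}Y$ implies $X\preceq Y$. $\vee$ and $\wedge$ denote maximum and minimum with respect to $\preceq$ (as $n$-ary or binary functions on $L([0,1])$). An IV fuzzy measure w.r.t. $\preceq$ is $m\colon 2^N\to L([0,1])$ with $m(\emptyset)=\mathbf 0$, $m(N)=\mathbf 1$, $m(A)\preceq m(B)$ for $A\subseteq B$. $\mathrm{Proj}_1(X_1,\dots,X_n)=X_1$. Monotonicity is w.r.t. $\preceq$. For a permutation $\sigma$ of $N$, $E_{\sigma(i)}=\{\sigma(i),\dots,\sigma(n)\}$. A triplet $(m,F,G)$ satisfies Condition (WDS)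 if for all $X_1,\dots,X_n\in L([0,1])$ and all permutations $\sigma_1,\sigma_2$ of $N$ with $X_{\sigma_j(1)}\preceq\dots\preceq X_{\sigma_j(n)}$ ($j=1,2$) one has $G\big(F(X_{\sigma_1(1)},m(E_{\sigma_1(1)})),\dots,F(X_{\sigma_1(n)},m(E_{\sigma_1(n)}))\big)=G\big(F(X_{\sigma_2(1)},m(E_{\sigma_2(1)})),\dots,F(X_{\sigma_2(n)},m(E_{\sigma_2(n)}))\big)$. *)

theory Defs
  imports Complex_Main "HOL-Combinatorics.Permutations"
begin

type_synonym ival = "real \<times> real"

definition LI :: "ival set" where
  "LI = {(a, b). 0 \<le> a \<and> a \<le> b \<and> b \<le> 1}"

definition spo_le :: "ival \<Rightarrow> ival \<Rightarrow> bool" where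
  "spo_le X Y \<longleftrightarrow> fst X \<le> fst Y \<and> snd X \<le> snd Y"

definition admissible_order :: "(ival \<Rightarrow> ival \<Rightarrow> bool) \<Rightarrow> bool" where
  "admissible_order le \<longleftrightarrow>
     (\<forall>X\<in>LI. le X X) \<and>
     (\<forall>X\<in>LI. \<forall>Y\<in>LI. le X Y \<and> le Y X \<longrightarrow> X = Y) \<and>
     (\<forall>X\<in>LI. \<forall>Y\<in>LI. \<forall>Z\<in>LI. le X Y \<and> le Y Z \<longrightarrow> le X Z) \<and>
     (\<forall>X\<in>LI. \<forall>Y\<in>LI. le X Y \<or> le Y X) \<and>
     (\<forall>X\<in>LI. \<forall>Y\<in>LI. spo_le X Y \<longrightarrow> le X Y)"

definition ivmax :: "(ival \<Rightarrow> ival \<Rightarrow> bool) \<Rightarrow> ival list \<Rightarrow> ival" where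
  "ivmax le xs = (THE x. x \<in> set xs \<and> (\<forall>y\<in>set xs. le y x))"

definition ivmin :: "(ival \<Rightarrow> ival \<Rightarrow> bool) \<Rightarrow> ival \<Rightarrow> ival \<Rightarrow> ival" where
  "ivmin le X Y = (if le X Y then X else Y)"

definition iv_fuzzy_measure :: "(ival \<Rightarrow> ival \<Rightarrow> bool) \<Rightarrow> nat \<Rightarrow> (nat set \<Rightarrow> ival) \<Rightarrow> bool" where
  "iv_fuzzy_measure le n m \<longleftrightarrow>
     (\<forall>A. A \<subseteq> {1..n} \<longrightarrow> m A \<in> LI) \<and>
     m {} = (0, 0) \<and> m {1..n} = (1, 1) \<and>
     (\<forall>A B. A \<subseteq> B \<and> B \<subseteq> {1..n} \<longrightarrow> le (m A) (m B))"

text \<open>Condition (WDS). E_{sigma(i)} = sigma ` {i..n}.\<close>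
definition WDS :: "(ival \<Rightarrow> ival \<Rightarrow> bool) \<Rightarrow> nat \<Rightarrow> (nat set \<Rightarrow> ival)
    \<Rightarrow> (ival \<Rightarrow> ival \<Rightarrow> ival) \<Rightarrow> (ival list \<Rightarrow> ival) \<Rightarrow> bool" where
  "WDS le n m F G \<longleftrightarrow>
     (\<forall>X :: nat \<Rightarrow> ival. (\<forall>i\<in>{1..n}. X i \<in> LI) \<longrightarrow>
       (\<forall>\<sigma>1 \<sigma>2. \<sigma>1 permutes {1..n} \<longrightarrow> \<sigma>2 permutes {1..n} \<longrightarrow>
          (\<forall>i\<in>{1..<n}. le (X (\<sigma>1 i)) (X (\<sigma>1 (Suc i)))) \<longrightarrow>
          (\<forall>i\<in>{1..<n}. le (X (\<sigma>2 i)) (X (\<sigma>2 (Suc i)))) \<longrightarrow>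
          G (map (\<lambda>i. F (X (\<sigma>1 i)) (m (\<sigma>1 ` {i..n}))) [1..<n+1])
          = G (map (\<lambda>i. F (X (\<sigma>2 i)) (m (\<sigma>2 ` {i..n}))) [1..<n+1])))"

end

theory Submission
  imports Defs
begin

lemma adm: assumes "admissible_order le"
  shows "\<And>X. X\<in>LI \<Longrightarrow> le X X"
    and "\<And>X Y. X\<in>LI \<Longrightarrow> Y\<in>LI \<Longrightarrow> le X Y \<Longrightarrow> le Y X \<Longrightarrow> X = Y"
    and "\<And>X Y Z. X\<in>LI \<Longrightarrow> Y\<in>LI \<Longrightarrow> Z\<in>LI \<Longrightarrow> le X Y \<Longrightarrow> le Y Z \<Longrightarrow> le X Z"
    and "\<And>X Y. X\<in>LI \<Longrightarrow> Y\<in>LI \<Longrightarrow> le X Y \<or> le Y X"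
  using assms unfolding admissible_order_def by blast+

lemma max_ex: assumes "admissible_order le" "set xs \<subseteq> LI" "xs \<noteq> []"
  shows "\<exists>x. x \<in> set xs \<and> (\<forall>y\<in>set xs. le y x)"
  using assms(2,3)
proof (induction xs)
  case Nil then show ?case by simp
next
  case (Cons a xs)
  have aL: "a \<in> LI" using Cons.prems(1) by simp
  have sL: "set xs \<subseteq> LI" using Cons.prems(1) by simp
  show ?case
  proof (cases "xs = []")
    case True
    have "le a a" using adm(1)[OF assms(1) aL] .
    then have "a \<in> set (a#xs) \<and> (\<forall>y\<in>set (a#xs). le y a)" using True by simp
    then show ?thesis by blast
  next
    case False
    obtain M where M: "M \<in> set xs" "\<forall>y\<in>set xs. le y M" using Cons.IH[OF sL False] by blast
    have MLI: "M \<in> LI" using M(1) sL by blast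
    show ?thesis
    proof (cases "le a M")
      case True
      then have "\<forall>y\<in>set (a#xs). le y M" using M by simp
      then show ?thesis using M(1) by (meson list.set_intros(2))
    next
      case False
      then have aM: "le M a" using adm(4)[OF assms(1) aL MLI] by blast
      have "\<forall>y\<in>set xs. le y a"
      proof
        fix y assume y: "y \<in> set xs"
        then have "y \<in> LI" using sL by blast
        then show "le y a" using adm(3)[OF assms(1) _ MLI aL _ aM] M(2) y by blast
      qed
      then have "\<forall>y\<in>set (a#xs). le y a" using adm(1)[OF assms(1) aL] by simp
      then show ?thesis by (meson list.set_intros(1))
    qed
  qed
qed

lemma ivmax_prop: assumes "admissible_order le" "set xs \<subseteq> LI" "xs \<noteq> []"
  shows "ivmax le xs \<in> set xs \<and> (\<forall>y\<in>set xs. le y (ivmax le xs))"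
proof -
  obtain x where x: "x \<in> set xs" "\<forall>y\<in>set xs. le y x" using max_ex[OF assms] by blast
  have "\<exists>!x. x \<in> set xs \<and> (\<forall>y\<in>set xs. le y x)"
  proof
    show "x \<in> set xs \<and> (\<forall>y\<in>set xs. le y x)" using x by blast
  next
    fix z assume "z \<in> set xs \<and> (\<forall>y\<in>set xs. le y z)"
    then show "z = x" using x adm(2)[OF assms(1)] assms(2) by blast
  qed
  then show ?thesis unfolding ivmax_def by (rule theI')
qed

lemma ivmax_mono: assumes "admissible_order le" "set xs \<subseteq> LI" "xs \<noteq> []"
  "set ys \<subseteq> LI" "ys \<noteq> []" "\<forall>a\<in>set xs. \<exists>b\<in>set ys. le a b"
  shows "le (ivmax le xs) (ivmax le ys)"
proof -
  note px = ivmax_prop[OF assms(1-3)] and py = ivmax_prop[OF assms(1,4,5)]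
  obtain b where b: "b \<in> set ys" "le (ivmax le xs) b" using px assms(6) by blast
  show ?thesis using adm(3)[OF assms(1), of "ivmax le xs" b "ivmax le ys"] b px py assms by auto
qed

lemma chain:
  assumes "admissible_order le" "\<forall>i\<in>{1..n}. X i \<in> LI" "\<sigma> permutes {1..n}"
    "\<forall>i\<in>{1..<n}. le (X (\<sigma> i)) (X (\<sigma> (Suc i)))" "1 \<le> a" "a \<le> b" "b \<le> n"
  shows "le (X (\<sigma> a)) (X (\<sigma> b))"
  using assms(6,7)
proof (induction b rule: dec_induct)
  case base
  have "\<sigma> a \<in> {1..n}" using permutes_in_image[OF assms(3)] assms(5,6,7) by auto
  then show ?case using adm(1)[OF assms(1)] assms(2) by auto
next
  case (step k)
  have k1: "\<sigma> k \<in> {1..n}" "\<sigma> (Suc k) \<in> {1..n}" "\<sigma> a \<in> {1..n}"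
    using permutes_in_image[OF assms(3)] assms(5) step by auto
  have "le (X (\<sigma> k)) (X (\<sigma> (Suc k)))" using assms(4) assms(5) step by auto
  have L: "X (\<sigma> a) \<in> LI" "X (\<sigma> k) \<in> LI" "X (\<sigma> (Suc k)) \<in> LI" using k1 assms(2) by blast+
  have ih: "le (X (\<sigma> a)) (X (\<sigma> k))" using step by simp
  show ?case using adm(3)[OF assms(1) L] ih \<open>le (X (\<sigma> k)) (X (\<sigma> (Suc k)))\<close> by blast
qed

lemma dom:
  assumes "admissible_order le" "\<forall>i\<in>{1..n}. X i \<in> LI"
    "\<sigma>1 permutes {1..n}" "\<sigma>2 permutes {1..n}"
    "\<forall>i\<in>{1..<n}. le (X (\<sigma>1 i)) (X (\<sigma>1 (Suc i)))"
    "\<forall>i\<in>{1..<n}. le (X (\<sigma>2 i)) (X (\<sigma>2 (Suc i)))"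
    "i \<in> {1..n}"
  shows "\<exists>k\<in>{1..n}. X (\<sigma>2 k) = X (\<sigma>1 i) \<and> \<sigma>1 ` {i..n} \<subseteq> \<sigma>2 ` {k..n}"
proof -
  define j where "j = \<sigma>1 i"
  have j: "j \<in> {1..n}" using permutes_in_image[OF assms(3)] assms(7) j_def by auto
  have inv2: "\<And>y. y \<in> {1..n} \<Longrightarrow> inv \<sigma>2 y \<in> {1..n} \<and> \<sigma>2 (inv \<sigma>2 y) = y"
    using permutes_in_image[OF permutes_inv[OF assms(4)]] permutes_inverses(1)[OF assms(4)] by blast
  define P where "P = (\<lambda>k. k \<in> {1..n} \<and> X (\<sigma>2 k) = X j)"
  have "P (inv \<sigma>2 j)" using inv2[OF j] P_def by auto
  then have Pk: "P (LEAST k. P k)" by (rule LeastI)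
  define k where "k = (LEAST k. P k)"
  have kk: "k \<in> {1..n}" "X (\<sigma>2 k) = X j" using Pk P_def k_def by auto
  have "\<sigma>1 ` {i..n} \<subseteq> \<sigma>2 ` {k..n}"
  proof
    fix y assume "y \<in> \<sigma>1 ` {i..n}"
    then obtain t where t: "t \<in> {i..n}" "y = \<sigma>1 t" by auto
    have y: "y \<in> {1..n}" using permutes_in_image[OF assms(3)] t assms(7) by auto
    have le1: "le (X j) (X y)" using chain[OF assms(1,2,3,5)] t assms(7) j_def by auto
    define s where "s = inv \<sigma>2 y"
    have s: "s \<in> {1..n}" "\<sigma>2 s = y" using inv2[OF y] s_def by auto
    have "k \<le> s"
    proof (rule ccontr)
      assume "\<not> k \<le> s"
      then have "le (X (\<sigma>2 s)) (X (\<sigma>2 k))" using chain[OF assms(1,2,4,6), of s k] s kk by simp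
      then have "X y = X j" using adm(2)[OF assms(1)] le1 s kk assms(2) y j by auto
      then have "P s" using P_def s by auto
      then have "k \<le> s" unfolding k_def by (rule Least_le)
      then show False using \<open>\<not> k \<le> s\<close> by simp
    qed
    then show "y \<in> \<sigma>2 ` {k..n}" using s by auto
  qed
  then show ?thesis using kk j_def by auto
qed

lemma part1:
  assumes adm0: "admissible_order le" and n: "n \<ge> 1"
    and FL: "\<forall>X\<in>LI. \<forall>Y\<in>LI. F X Y \<in> LI"
    and mm: "iv_fuzzy_measure le n m"
    and Fm: "\<forall>X\<in>LI. \<forall>Y\<in>LI. \<forall>Z\<in>LI. le Y Z \<longrightarrow> le (F X Y) (F X Z)"
  shows "WDS le n m F (ivmax le)"
  unfolding WDS_def
proof (intro allI impI)
  fix X :: "nat \<Rightarrow> ival" and \<sigma>1 \<sigma>2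
  assume XL: "\<forall>i\<in>{1..n}. X i \<in> LI" and p1: "\<sigma>1 permutes {1..n}" and p2: "\<sigma>2 permutes {1..n}"
    and s1: "\<forall>i\<in>{1..<n}. le (X (\<sigma>1 i)) (X (\<sigma>1 (Suc i)))"
    and s2: "\<forall>i\<in>{1..<n}. le (X (\<sigma>2 i)) (X (\<sigma>2 (Suc i)))"
  have setu: "set [1..<n+1] = {1..n}" by (simp only: set_upt Suc_eq_plus1[symmetric] atLeastLessThanSuc_atLeastAtMost)
  have mL: "\<And>A. A \<subseteq> {1..n} \<Longrightarrow> m A \<in> LI" using mm unfolding iv_fuzzy_measure_def by blast
  have mmono: "\<And>A B. A \<subseteq> B \<Longrightarrow> B \<subseteq> {1..n} \<Longrightarrow> le (m A) (m B)"
    using mm unfolding iv_fuzzy_measure_def by blast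
  have gen: "\<forall>a\<in>set (map (\<lambda>i. F (X (\<sigma>1 i)) (m (\<sigma>1 ` {i..n}))) [1..<n+1]).
      \<exists>b\<in>set (map (\<lambda>i. F (X (\<sigma>2 i)) (m (\<sigma>2 ` {i..n}))) [1..<n+1]). le a b"
    if p1: "\<sigma>1 permutes {1..n}" and p2: "\<sigma>2 permutes {1..n}"
      and s1: "\<forall>i\<in>{1..<n}. le (X (\<sigma>1 i)) (X (\<sigma>1 (Suc i)))"
      and s2: "\<forall>i\<in>{1..<n}. le (X (\<sigma>2 i)) (X (\<sigma>2 (Suc i)))" for \<sigma>1 \<sigma>2
  proof
    fix a assume "a \<in> set (map (\<lambda>i. F (X (\<sigma>1 i)) (m (\<sigma>1 ` {i..n}))) [1..<n+1])"
    then have "a \<in> (\<lambda>i. F (X (\<sigma>1 i)) (m (\<sigma>1 ` {i..n}))) ` {1..n}" using setu by (simp only: set_map)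
    then obtain i where i: "i \<in> {1..n}" "a = F (X (\<sigma>1 i)) (m (\<sigma>1 ` {i..n}))" by blast
    obtain k where k: "k \<in> {1..n}" "X (\<sigma>2 k) = X (\<sigma>1 i)" "\<sigma>1 ` {i..n} \<subseteq> \<sigma>2 ` {k..n}"
      using dom[OF adm0 XL p1 p2 s1 s2 i(1)] by blast
    have E1: "\<sigma>1 ` {i..n} \<subseteq> {1..n}"
    proof -
      have "\<sigma>1 ` {i..n} \<subseteq> \<sigma>1 ` {1..n}" using i(1) by (intro image_mono) auto
      then show ?thesis using permutes_image[OF p1] by simp
    qed
    have E2: "\<sigma>2 ` {k..n} \<subseteq> {1..n}"
    proof -
      have "\<sigma>2 ` {k..n} \<subseteq> \<sigma>2 ` {1..n}" using k(1) by (intro image_mono) auto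
      then show ?thesis using permutes_image[OF p2] by simp
    qed
    have XiL: "X (\<sigma>1 i) \<in> LI" using XL[rule_format, OF permutes_in_image[OF p1, THEN iffD2, OF i(1)]] .
    have "le a (F (X (\<sigma>2 k)) (m (\<sigma>2 ` {k..n})))"
      unfolding i(2) k(2) using Fm XiL mL[OF E1] mL[OF E2] mmono[OF k(3) E2] by blast
    moreover have "F (X (\<sigma>2 k)) (m (\<sigma>2 ` {k..n})) \<in> set (map (\<lambda>i. F (X (\<sigma>2 i)) (m (\<sigma>2 ` {i..n}))) [1..<n+1])"
    proof -
      have "F (X (\<sigma>2 k)) (m (\<sigma>2 ` {k..n})) \<in> (\<lambda>i. F (X (\<sigma>2 i)) (m (\<sigma>2 ` {i..n}))) ` {1..n}"
        using k(1) by blast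
      then show ?thesis using setu by (simp only: set_map)
    qed
    ultimately show "\<exists>b\<in>set (map (\<lambda>i. F (X (\<sigma>2 i)) (m (\<sigma>2 ` {i..n}))) [1..<n+1]). le a b" by blast
  qed
  have setL: "set (map (\<lambda>i. F (X (\<sigma> i)) (m (\<sigma> ` {i..n}))) [1..<n+1]) \<subseteq> LI"
    if p: "\<sigma> permutes {1..n}" for \<sigma>
  proof
    fix a assume "a \<in> set (map (\<lambda>i. F (X (\<sigma> i)) (m (\<sigma> ` {i..n}))) [1..<n+1])"
    then have "a \<in> (\<lambda>i. F (X (\<sigma> i)) (m (\<sigma> ` {i..n}))) ` {1..n}" using setu by (simp only: set_map)
    then obtain i where i: "i \<in> {1..n}" "a = F (X (\<sigma> i)) (m (\<sigma> ` {i..n}))" by blast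
    have E1: "\<sigma> ` {i..n} \<subseteq> {1..n}"
    proof -
      have "\<sigma> ` {i..n} \<subseteq> \<sigma> ` {1..n}" using i(1) by (intro image_mono) auto
      then show ?thesis using permutes_image[OF p] by simp
    qed
    have XiL: "X (\<sigma> i) \<in> LI" using XL[rule_format, OF permutes_in_image[OF p, THEN iffD2, OF i(1)]] .
    show "a \<in> LI" unfolding i(2) using FL XiL mL[OF E1] by blast
  qed
  have ne: "map (\<lambda>i. F (X (\<sigma> i)) (m (\<sigma> ` {i..n}))) [1..<n+1] \<noteq> []" for \<sigma>
    using n by simp
  show "ivmax le (map (\<lambda>i. F (X (\<sigma>1 i)) (m (\<sigma>1 ` {i..n}))) [1..<n+1]) =
        ivmax le (map (\<lambda>i. F (X (\<sigma>2 i)) (m (\<sigma>2 ` {i..n}))) [1..<n+1])"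
  proof -
    note q1 = ivmax_prop[OF adm0 setL[OF p1] ne] and q2 = ivmax_prop[OF adm0 setL[OF p2] ne]
    have M1: "ivmax le (map (\<lambda>i. F (X (\<sigma>1 i)) (m (\<sigma>1 ` {i..n}))) [1..<n+1]) \<in> LI"
      using conjunct1[OF q1] setL[OF p1] by (rule subsetD[rotated])
    have M2: "ivmax le (map (\<lambda>i. F (X (\<sigma>2 i)) (m (\<sigma>2 ` {i..n}))) [1..<n+1]) \<in> LI"
      using conjunct1[OF q2] setL[OF p2] by (rule subsetD[rotated])
    show ?thesis by (rule adm(2)[OF adm0 M1 M2
      ivmax_mono[OF adm0 setL[OF p1] ne setL[OF p2] ne gen[OF p1 p2 s1 s2]]
      ivmax_mono[OF adm0 setL[OF p2] ne setL[OF p1] ne gen[OF p2 p1 s2 s1]]])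
  qed
qed

lemma ivmin_L: "admissible_order le \<Longrightarrow> \<forall>X\<in>LI. \<forall>Y\<in>LI. ivmin le X Y \<in> LI"
  unfolding ivmin_def by auto

lemma ivmin_mono: assumes "admissible_order le"
  shows "\<forall>X\<in>LI. \<forall>Y\<in>LI. \<forall>Z\<in>LI. le Y Z \<longrightarrow> le (ivmin le X Y) (ivmin le X Z)"
proof (intro ballI impI)
  fix X Y Z assume L: "X \<in> LI" "Y \<in> LI" "Z \<in> LI" and yz: "le Y Z"
  note a = adm[OF assms]
  show "le (ivmin le X Y) (ivmin le X Z)"
  proof (cases "le X Y")
    case True
    then have xz: "le X Z" using a(3)[OF L True yz] by blast
    show ?thesis unfolding ivmin_def using True xz a(1)[OF L(1)] by simp
  next
    case False
    then have yx: "le Y X" using a(4)[OF L(1,2)] by blast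
    show ?thesis
    proof (cases "le X Z")
      case True then show ?thesis unfolding ivmin_def using False yx by simp
    next
      case False2: False then show ?thesis unfolding ivmin_def using False yz by simp
    qed
  qed
qed

theorem corollary1:
  fixes n :: nat
    and le :: "ival \<Rightarrow> ival \<Rightarrow> bool"
    and F :: "ival \<Rightarrow> ival \<Rightarrow> ival"
    and G :: "ival list \<Rightarrow> ival"
    and m :: "nat set \<Rightarrow> ival"
  assumes "n \<ge> 1"
    and "admissible_order le"
    and "\<forall>X\<in>LI. \<forall>Y\<in>LI. F X Y \<in> LI"
    and "\<forall>xs. length xs = n \<and> set xs \<subseteq> LI \<longrightarrow> G xs \<in> LI"
    and "iv_fuzzy_measure le n m"
  shows "((\<forall>X\<in>LI. \<forall>Y\<in>LI. \<forall>Z\<in>LI. le Y Z \<longrightarrow> le (F X Y) (F X Z))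
            \<longrightarrow> WDS le n m F (ivmax le))
       \<and> ((\<exists>f. (\<forall>X\<in>LI. f X \<in> LI) \<and>
               (G = (\<lambda>xs. f (hd xs)) \<or> G = (\<lambda>xs. f (ivmax le xs))))
            \<longrightarrow> WDS le n m (ivmin le) G)
       \<and> WDS le n m (ivmin le) (ivmax le)"
proof -
  have iii: "WDS le n m (ivmin le) (ivmax le)"
    using part1[OF assms(2,1) ivmin_L[OF assms(2)] assms(5) ivmin_mono[OF assms(2)]] .
  have ii: "WDS le n m (ivmin le) G"
    if "\<exists>f. (\<forall>X\<in>LI. f X \<in> LI) \<and> (G = (\<lambda>xs. f (hd xs)) \<or> G = (\<lambda>xs. f (ivmax le xs)))"
  proof -
    from that obtain f where f0: "(\<forall>X\<in>LI. f X \<in> LI) \<and> (G = (\<lambda>xs. f (hd xs)) \<or> G = (\<lambda>xs. f (ivmax le xs)))"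
      by (rule exE)
    from f0 have f: "G = (\<lambda>xs. f (hd xs)) \<or> G = (\<lambda>xs. f (ivmax le xs))" by (rule conjunct2)
    from f show ?thesis
    proof
      assume G': "G = (\<lambda>xs. f (ivmax le xs))"
      show ?thesis unfolding WDS_def G'
      proof (intro allI impI)
        fix X :: "nat \<Rightarrow> ival" and \<sigma>1 \<sigma>2
        assume XL: "\<forall>i\<in>{1..n}. X i \<in> LI" and p1: "\<sigma>1 permutes {1..n}" and p2: "\<sigma>2 permutes {1..n}"
          and s1: "\<forall>i\<in>{1..<n}. le (X (\<sigma>1 i)) (X (\<sigma>1 (Suc i)))"
          and s2: "\<forall>i\<in>{1..<n}. le (X (\<sigma>2 i)) (X (\<sigma>2 (Suc i)))"
        have e: "ivmax le (map (\<lambda>i. ivmin le (X (\<sigma>1 i)) (m (\<sigma>1 ` {i..n}))) [1..<n+1]) =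
              ivmax le (map (\<lambda>i. ivmin le (X (\<sigma>2 i)) (m (\<sigma>2 ` {i..n}))) [1..<n+1])"
          using iii XL p1 p2 s1 s2 unfolding WDS_def by blast
        show "f (ivmax le (map (\<lambda>i. ivmin le (X (\<sigma>1 i)) (m (\<sigma>1 ` {i..n}))) [1..<n+1])) =
              f (ivmax le (map (\<lambda>i. ivmin le (X (\<sigma>2 i)) (m (\<sigma>2 ` {i..n}))) [1..<n+1]))"
          unfolding e ..
      qed
    next
      assume G: "G = (\<lambda>xs. f (hd xs))"
      show ?thesis unfolding WDS_def
      proof (intro allI impI)
        fix X :: "nat \<Rightarrow> ival" and \<sigma>1 \<sigma>2
        assume XL: "\<forall>i\<in>{1..n}. X i \<in> LI" and p1: "\<sigma>1 permutes {1..n}" and p2: "\<sigma>2 permutes {1..n}"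
          and s1: "\<forall>i\<in>{1..<n}. le (X (\<sigma>1 i)) (X (\<sigma>1 (Suc i)))"
          and s2: "\<forall>i\<in>{1..<n}. le (X (\<sigma>2 i)) (X (\<sigma>2 (Suc i)))"
        have one: "1 \<in> {1..n}" using assms(1) by auto
        obtain k where k: "k \<in> {1..n}" "X (\<sigma>2 k) = X (\<sigma>1 1)"
          using dom[OF assms(2) XL p1 p2 s1 s2 one] by blast
        obtain k' where k': "k' \<in> {1..n}" "X (\<sigma>1 k') = X (\<sigma>2 1)"
          using dom[OF assms(2) XL p2 p1 s2 s1 one] by blast
        have a0: "le (X (\<sigma>2 1)) (X (\<sigma>2 k))"
          by (rule chain[OF assms(2) XL p2 s2]) (use k(1) in simp_all)
        have b0: "le (X (\<sigma>1 1)) (X (\<sigma>1 k'))"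
          by (rule chain[OF assms(2) XL p1 s1]) (use k'(1) in simp_all)
        have a: "le (X (\<sigma>2 1)) (X (\<sigma>1 1))" using a0 unfolding k(2) .
        have b: "le (X (\<sigma>1 1)) (X (\<sigma>2 1))" using b0 unfolding k'(2) .
        have L: "X (\<sigma>1 1) \<in> LI" "X (\<sigma>2 1) \<in> LI"
          using XL[rule_format, OF permutes_in_image[OF p1, THEN iffD2, OF one]]
            XL[rule_format, OF permutes_in_image[OF p2, THEN iffD2, OF one]] .
        have eq: "X (\<sigma>1 1) = X (\<sigma>2 1)" by (rule adm(2)[OF assms(2) L b a])
        have h: "[1..<n+1] = 1 # [Suc 1..<n+1]" using assms(1) by (intro upt_conv_Cons) simp
        show "G (map (\<lambda>i. ivmin le (X (\<sigma>1 i)) (m (\<sigma>1 ` {i..n}))) [1..<n+1]) =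
              G (map (\<lambda>i. ivmin le (X (\<sigma>2 i)) (m (\<sigma>2 ` {i..n}))) [1..<n+1])"
          unfolding G h list.map list.sel(1) permutes_image[OF p1] permutes_image[OF p2] eq ..
      qed
    qed
  qed
  show ?thesis
    apply (intro conjI impI)
      apply (erule part1[OF assms(2,1,3,5)])
     apply (erule ii)
    by (rule iii)
qed

end
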